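(* Let $Z\in\mathbb{R}^{p_1\times p_2}$ have independent entries $Z_{ij}\sim N(0,\sigma_i^2)$, where $\sigma_1,\dots,\sigma_{p_1}\ge 0$. Then there is a universal constant $c>0$ such that \[ \mathbb{E}\|ZZ^\top-\mathbb{E}ZZ^\top\|\ge c\left(\sum_{i}\sigma_i^2+\sqrt{p_2\sum_i\sigma_i^2}\cdot\max_i\sigma_i\right). \]
   Context: $\|\cdot\|$ is the spectral norm. *)

theory Defs
  imports "HOL-Probability.Probability"
begin

definition gauss :: "real \<Rightarrow> real measure" where
  "gauss s = (if s = 0 then return lborel 0 else density lborel (normal_density 0 s))"

definition spec_norm :: "nat \<Rightarrow> nat \<Rightarrow> (nat \<Rightarrow> nat \<Rightarrow> real) \<Rightarrow> real" where
  "spec_norm n m A = Sup {sqrt (\<Sum>i<n. (\<Sum>j<m. A i j * x j)\<^sup>2) | x.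
                          (\<Sum>j<m. (x j)\<^sup>2) \<le> 1}"

definition gauss_matrix_law :: "nat \<Rightarrow> nat \<Rightarrow> (nat \<Rightarrow> real) \<Rightarrow> (nat \<times> nat \<Rightarrow> real) measure" where
  "gauss_matrix_law p1 p2 \<sigma> = (\<Pi>\<^sub>M ij \<in> {..<p1} \<times> {..<p2}. gauss (\<sigma> (fst ij)))"

definition gram :: "nat \<Rightarrow> (nat \<times> nat \<Rightarrow> real) \<Rightarrow> nat \<Rightarrow> nat \<Rightarrow> real" where
  "gram p2 Z i k = (\<Sum>j<p2. Z (i, j) * Z (k, j))"

end

theory Submission
  imports Defs
begin


lemma spec_norm_L2: "spec_norm n m A = Sup {L2_set (\<lambda>i. \<Sum>j<m. A i j * x j) {..<n} | x. (\<Sum>j<m. (x j)\<^sup>2) \<le> 1}"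
  unfolding spec_norm_def L2_set_def by simp

lemma elem_le_sum_abs:
  fixes A :: "nat \<Rightarrow> nat \<Rightarrow> real"
  assumes "(\<Sum>j<m. (x j)\<^sup>2) \<le> 1"
  shows "L2_set (\<lambda>i. \<Sum>j<m. A i j * x j) {..<n} \<le> (\<Sum>i<n. \<Sum>j<m. \<bar>A i j\<bar>)"
proof -
  have xj: "\<bar>x j\<bar> \<le> 1" if "j < m" for j
  proof -
    have "(x j)\<^sup>2 \<le> (\<Sum>j<m. (x j)\<^sup>2)"
      using that by (intro member_le_sum) auto
    then have "(x j)\<^sup>2 \<le> 1" using assms by simp
    then show ?thesis by (simp add: abs_square_le_1)
  qed
  have "L2_set (\<lambda>i. \<Sum>j<m. A i j * x j) {..<n} \<le> (\<Sum>i<n. \<bar>\<Sum>j<m. A i j * x j\<bar>)"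
    by (rule L2_set_le_sum_abs)
  also have "\<dots> \<le> (\<Sum>i<n. \<Sum>j<m. \<bar>A i j\<bar>)"
  proof (rule sum_mono)
    fix i
    have "\<bar>\<Sum>j<m. A i j * x j\<bar> \<le> (\<Sum>j<m. \<bar>A i j * x j\<bar>)" by (rule sum_abs)
    also have "\<dots> \<le> (\<Sum>j<m. \<bar>A i j\<bar>)"
      by (intro sum_mono) (auto simp: abs_mult intro: mult_left_le[OF xj])
    finally show "\<bar>\<Sum>j<m. A i j * x j\<bar> \<le> (\<Sum>j<m. \<bar>A i j\<bar>)" .
  qed
  finally show ?thesis .
qed

lemma spec_set_bdd:
  fixes A :: "nat \<Rightarrow> nat \<Rightarrow> real"
  shows   "bdd_above {L2_set (\<lambda>i. \<Sum>j<m. A i j * x j) {..<n} | x. (\<Sum>j<m. (x j)\<^sup>2) \<le> 1}"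
  by (rule bdd_aboveI[where M="\<Sum>i<n. \<Sum>j<m. \<bar>A i j\<bar>"]) (use elem_le_sum_abs[where m=m and A=A and n=n] in blast)

lemma spec_ge:
  fixes A :: "nat \<Rightarrow> nat \<Rightarrow> real"
  assumes "(\<Sum>j<m. (x j)\<^sup>2) \<le> 1"
  shows "L2_set (\<lambda>i. \<Sum>j<m. A i j * x j) {..<n} \<le> spec_norm n m A"
  unfolding spec_norm_L2 by (rule cSup_upper[OF _ spec_set_bdd]) (use assms in auto)

lemma spec_nonneg: "0 \<le> spec_norm n m A"
  using spec_ge[where m=m and x="\<lambda>_. 0" and n=n and A=A] by (simp add: L2_set_0')

lemma spec_le_sum_abs: "spec_norm n m A \<le> (\<Sum>i<n. \<Sum>j<m. \<bar>A i j\<bar>)"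
  unfolding spec_norm_L2
  apply (rule cSup_least)
  using elem_le_sum_abs[where m=m and A=A and n=n] by (auto intro!: exI[of _ "\<lambda>_. 0"])

lemma spec_lip: "spec_norm n m A \<le> spec_norm n m B + (\<Sum>i<n. \<Sum>j<m. \<bar>A i j - B i j\<bar>)"
proof -
  have "L2_set (\<lambda>i. \<Sum>j<m. A i j * x j) {..<n} \<le> spec_norm n m B + (\<Sum>i<n. \<Sum>j<m. \<bar>A i j - B i j\<bar>)"
    if x: "(\<Sum>j<m. (x j)\<^sup>2) \<le> 1" for x
  proof -
    have eq: "(\<lambda>i. \<Sum>j<m. A i j * x j) = (\<lambda>i. (\<Sum>j<m. B i j * x j) + (\<Sum>j<m. (A i j - B i j) * x j))"
      by (auto simp: fun_eq_iff sum.distrib[symmetric] algebra_simps)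
    have "L2_set (\<lambda>i. \<Sum>j<m. A i j * x j) {..<n} \<le> L2_set (\<lambda>i. \<Sum>j<m. B i j * x j) {..<n} + L2_set (\<lambda>i. \<Sum>j<m. (A i j - B i j) * x j) {..<n}"
      unfolding eq by (rule L2_set_triangle_ineq)
    also have "\<dots> \<le> spec_norm n m B + (\<Sum>i<n. \<Sum>j<m. \<bar>A i j - B i j\<bar>)"
      by (intro add_mono spec_ge x elem_le_sum_abs[where A="\<lambda>i j. A i j - B i j"])
    finally show ?thesis .
  qed
  then show ?thesis
    unfolding spec_norm_L2[of n m A] by (intro cSup_least) (auto intro!: exI[of _ "\<lambda>_. 0"])
qed


lemma normal_density_abs: "normal_density 0 s = normal_density 0 \<bar>s\<bar>"
  by (simp add: fun_eq_iff normal_density_def)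

lemma gauss_alt: "s \<noteq> 0 \<Longrightarrow> gauss s = density lborel (normal_density 0 \<bar>s\<bar>)"
  by (simp add: gauss_def normal_density_abs[of s])

lemma prob_space_gauss: "prob_space (gauss s)"
proof (cases "s = 0")
  case True then show ?thesis by (auto simp: gauss_def prob_space_return)
next
  case False then show ?thesis
    unfolding gauss_alt[OF False] by (intro prob_space_normal_density) simp
qed

lemma integrable_return0:
  fixes f :: "real \<Rightarrow> real"
  assumes [measurable]: "f \<in> borel_measurable borel"
  shows "integrable (return lborel 0) f"
  unfolding integrable_iff_bounded
  by (auto simp: nn_integral_return)

lemma integral_return0:
  fixes f :: "real \<Rightarrow> real"
  assumes [measurable]: "f \<in> borel_measurable borel"
  shows "integral\<^sup>L (return lborel 0) f = f 0"
  by (rule integral_return) auto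

lemma sets_gauss[simp, measurable_cong]: "sets (gauss s) = sets borel"
  by (simp add: gauss_def)

lemma space_gauss[simp]: "space (gauss s) = UNIV"
  by (simp add: gauss_def)

definition gm :: "real \<Rightarrow> nat \<Rightarrow> real" where
  "gm s n = (if even n then s ^ n * fact n / (2 ^ (n div 2) * fact (n div 2)) else 0)"

lemma gauss_moment:
  shows "integrable (gauss s) (\<lambda>z. z ^ n) \<and> (\<integral>z. z ^ n \<partial>gauss s) = gm \<bar>s\<bar> n"
proof (cases "s = 0")
  case True
  then show ?thesis by (cases n) (auto simp: gauss_def gm_def integrable_return0 integral_return0 measure_return)
next
  case False
  let ?t = "\<bar>s\<bar>"
  have t: "0 < ?t" using False by simp
  have int: "integrable lborel (\<lambda>x. normal_density 0 ?t x * x ^ n)"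
    using integrable_normal_moment[OF t, of 0 n] by simp
  have "integrable (gauss s) (\<lambda>z. z ^ n)"
    unfolding gauss_alt[OF False]
    by (subst integrable_density) (use int in auto)
  moreover have "(\<integral>z. z ^ n \<partial>gauss s) = (\<integral>x. normal_density 0 ?t x * x ^ n \<partial>lborel)"
    unfolding gauss_alt[OF False] by (subst integral_density) auto
  moreover have "(\<integral>x. normal_density 0 ?t x * x ^ n \<partial>lborel) = gm ?t n"
  proof (cases "even n")
    case True
    then obtain k where n: "n = 2 * k" by (auto elim: evenE)
    have "(\<integral>x. normal_density 0 ?t x * x ^ n \<partial>lborel) = fact (2 * k) / ((2 / ?t\<^sup>2)^k * fact k)"
      using integral_normal_moment_even[OF t, of 0 k] by (simp add: n)
    also have "\<dots> = gm ?t n"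
      using t by (simp add: gm_def n power_mult power_divide field_simps power_even_abs
          flip: power_mult_distrib power_mult)
    finally show ?thesis .
  next
    case odd: False
    then obtain k where n: "n = 2 * k + 1" by (auto elim: oddE)
    show ?thesis
      using integral_normal_moment_odd[OF t, of 0 k] odd by (simp add: n gm_def)
  qed
  ultimately show ?thesis by simp
qed

lemma gm_vals: "gm s 0 = 1" "gm s 1 = 0" "gm s 2 = s^2" "gm s 3 = 0" "gm s 4 = 3 * s^4"
   "gm s 5 = 0" "gm s 6 = 15 * s^6" "gm s 7 = 0" "gm s 8 = 105 * s^8"
  by (simp_all add: gm_def fact_numeral)


lemma abs_quartic_bound:
  fixes y t :: real
  assumes t: "t > 0"
  shows "y\<^sup>2 / t - y ^ 4 / (4 * t ^ 3) \<le> \<bar>y\<bar>"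
proof -
  define r where "r = \<bar>y\<bar> / t"
  have r0: "r \<ge> 0" using t by (simp add: r_def)
  have y: "\<bar>y\<bar> = t * r" using t by (simp add: r_def)
  have y2: "y\<^sup>2 = (t * r)\<^sup>2" by (metis power2_abs y)
  have y4: "y ^ 4 = (t * r) ^ 4"
  proof -
    have "y ^ 4 = \<bar>y\<bar> ^ 4" by (simp add: power_even_abs)
    then show ?thesis using y by simp
  qed
  have key: "r\<^sup>2 - r ^ 4 / 4 \<le> r"
  proof (cases "r \<le> 1")
    case True
    have "r\<^sup>2 \<le> r" using True r0 by (simp add: power2_eq_square mult_right_le_one_le)
    moreover have "0 \<le> r ^ 4" using r0 by simp
    ultimately show ?thesis by linarith
  next
    case False
    have "0 \<le> (r\<^sup>2 - 2)\<^sup>2" by simp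
    then have "r\<^sup>2 - r ^ 4 / 4 \<le> 1" by (simp add: power2_eq_square power4_eq_xxxx algebra_simps)
    then show ?thesis using False by linarith
  qed
  have "y\<^sup>2 / t - y ^ 4 / (4 * t ^ 3) = t * (r\<^sup>2 - r ^ 4 / 4)"
  proof -
    have a: "y\<^sup>2 / t = t * r\<^sup>2" using t unfolding y2 by (simp add: power2_eq_square)
    have t4: "t ^ 4 = t * t ^ 3" by (simp add: numeral_eq_Suc)
    have b: "y ^ 4 / (4 * t ^ 3) = t * (r ^ 4 / 4)"
      using t unfolding y4 power_mult_distrib t4 by simp
    show ?thesis unfolding a b by (simp add: right_diff_distrib)
  qed
  also have "\<dots> \<le> t * r" using key t by (intro mult_left_mono) auto
  finally show ?thesis using y by linarith
qed

context prob_space begin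

lemma abs_lower_moment:
  fixes Y :: "'a \<Rightarrow> real"
  assumes Ym[measurable]: "Y \<in> borel_measurable M"
    and i2: "integrable M (\<lambda>\<omega>. Y \<omega> ^ 2)" and i4: "integrable M (\<lambda>\<omega>. Y \<omega> ^ 4)"
    and bnd: "expectation (\<lambda>\<omega>. Y \<omega> ^ 4) \<le> 18 * (expectation (\<lambda>\<omega>. Y \<omega> ^ 2))\<^sup>2"
  shows "sqrt (expectation (\<lambda>\<omega>. Y \<omega> ^ 2)) / 6 \<le> expectation (\<lambda>\<omega>. \<bar>Y \<omega>\<bar>)"
proof -
  define V where "V = expectation (\<lambda>\<omega>. Y \<omega> ^ 2)"
  define Q where "Q = expectation (\<lambda>\<omega>. Y \<omega> ^ 4)"
  have V0: "0 \<le> V" unfolding V_def by (intro integral_nonneg_AE) auto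
  have iabs: "integrable M (\<lambda>\<omega>. \<bar>Y \<omega>\<bar>)"
  proof (rule Bochner_Integration.integrable_bound[OF Bochner_Integration.integrable_add[OF integrable_const[of 1] i2]])
    show "AE x in M. norm \<bar>Y x\<bar> \<le> norm (1 + Y x ^ 2)"
    proof (rule AE_I2)
      fix x
      have h: "(\<bar>Y x\<bar> - 1)\<^sup>2 = (Y x)\<^sup>2 - 2 * \<bar>Y x\<bar> + 1"
        by (simp add: power2_eq_square algebra_simps)
      have "0 \<le> (\<bar>Y x\<bar> - 1)\<^sup>2" by simp
      then have "\<bar>Y x\<bar> \<le> 1 + (Y x)\<^sup>2" unfolding h using zero_le_power2[of "Y x"] by linarith
      then show "norm \<bar>Y x\<bar> \<le> norm (1 + Y x ^ 2)" by simp
    qed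
  qed simp
  have E0: "0 \<le> expectation (\<lambda>\<omega>. \<bar>Y \<omega>\<bar>)" by (intro integral_nonneg_AE) auto
  show ?thesis
  proof (cases "V = 0")
    case True then show ?thesis using E0 by (simp add: V_def)
  next
    case False
    then have Vp: "V > 0" using V0 by simp
    define t where "t = 3 * sqrt V"
    have tp: "t > 0" using Vp by (simp add: t_def)
    have "expectation (\<lambda>\<omega>. (Y \<omega>)\<^sup>2 / t - Y \<omega> ^ 4 / (4 * t ^ 3)) \<le> expectation (\<lambda>\<omega>. \<bar>Y \<omega>\<bar>)"
      by (intro integral_mono iabs Bochner_Integration.integrable_diff integrable_divide i2 i4 abs_quartic_bound tp)
    moreover have "expectation (\<lambda>\<omega>. (Y \<omega>)\<^sup>2 / t - Y \<omega> ^ 4 / (4 * t ^ 3)) = V / t - Q / (4 * t ^ 3)"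
      by (simp add: V_def Q_def i2 i4)
    moreover have "sqrt V / 6 \<le> V / t - Q / (4 * t ^ 3)"
    proof -
      have Q: "Q \<le> 18 * V\<^sup>2" using bnd by (simp add: Q_def V_def)
      define q where "q = sqrt V"
      have qp: "q > 0" using Vp by (simp add: q_def)
      have Vq: "V = q * q" using V0 by (simp add: q_def)
      have tq: "t = 3 * q" by (simp add: t_def q_def)
      have "Q / (4 * t ^ 3) \<le> 18 * V\<^sup>2 / (4 * t ^ 3)"
        using Q tp by (intro divide_right_mono) auto
      also have "\<dots> = q / 6"
        using qp unfolding Vq tq by (simp add: field_simps power2_eq_square power3_eq_cube)
      finally have "Q / (4 * t ^ 3) \<le> sqrt V / 6" by (simp add: q_def)
      moreover have "V / t = sqrt V / 3"
        using qp unfolding Vq tq by (simp add: q_def[symmetric])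
      ultimately show ?thesis by linarith
    qed
    ultimately show ?thesis by (simp add: V_def)
  qed
qed

lemma sum_moments:
  fixes Y :: "'j \<Rightarrow> 'a \<Rightarrow> real"
  assumes "finite J" and "indep_vars (\<lambda>_. borel) Y J"
    and "\<And>j n. j \<in> J \<Longrightarrow> n \<le> 4 \<Longrightarrow> integrable M (\<lambda>\<omega>. Y j \<omega> ^ n)"
    and "\<And>j. j \<in> J \<Longrightarrow> expectation (Y j) = 0"
  shows "(\<forall>n\<le>4. integrable M (\<lambda>\<omega>. (\<Sum>j\<in>J. Y j \<omega>) ^ n)) \<and>
         expectation (\<lambda>\<omega>. \<Sum>j\<in>J. Y j \<omega>) = 0 \<and>
         expectation (\<lambda>\<omega>. (\<Sum>j\<in>J. Y j \<omega>) ^ 2) = (\<Sum>j\<in>J. expectation (\<lambda>\<omega>. Y j \<omega> ^ 2)) \<and>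
         expectation (\<lambda>\<omega>. (\<Sum>j\<in>J. Y j \<omega>) ^ 4) \<le>
           (\<Sum>j\<in>J. expectation (\<lambda>\<omega>. Y j \<omega> ^ 4)) + 3 * (\<Sum>j\<in>J. expectation (\<lambda>\<omega>. Y j \<omega> ^ 2))\<^sup>2"
  using assms
proof (induction J rule: finite_induct)
  case empty
  then show ?case by (auto simp: power_0_left)
next
  case (insert i F)
  have indF: "indep_vars (\<lambda>_. borel) Y F"
    using insert.prems(1) by (rule indep_vars_subset) auto
  note IH = insert.IH[OF indF insert.prems(2,3)]
  define X where "X = Y i"
  define S where "S = (\<lambda>\<omega>. \<Sum>j\<in>F. Y j \<omega>)"
  have sum_eq: "(\<lambda>\<omega>. \<Sum>j\<in>insert i F. Y j \<omega>) = (\<lambda>\<omega>. X \<omega> + S \<omega>)"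
    using insert.hyps by (simp add: X_def S_def)
  have iX: "\<And>n. n \<le> 4 \<Longrightarrow> integrable M (\<lambda>\<omega>. X \<omega> ^ n)" using insert.prems(2) by (simp add: X_def)
  have iS: "\<And>n. n \<le> 4 \<Longrightarrow> integrable M (\<lambda>\<omega>. S \<omega> ^ n)" using IH by (simp add: S_def)
  have ES: "expectation S = 0" using IH by (simp add: S_def)
  have EX: "expectation X = 0" using insert.prems(3) by (simp add: X_def)
  have ind: "indep_var borel X borel S"
    unfolding X_def S_def by (rule indep_vars_sum[OF insert.hyps insert.prems(1)])
  have prod: "integrable M (\<lambda>\<omega>. X \<omega> ^ a * S \<omega> ^ b) \<and>
      expectation (\<lambda>\<omega>. X \<omega> ^ a * S \<omega> ^ b) = expectation (\<lambda>\<omega>. X \<omega> ^ a) * expectation (\<lambda>\<omega>. S \<omega> ^ b)"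
    if "a \<le> 4" "b \<le> 4" for a b
  proof -
    have "indep_var borel ((\<lambda>x. x ^ a) \<circ> X) borel ((\<lambda>x. x ^ b) \<circ> S)"
      by (rule indep_var_compose[OF ind]) auto
    then have i: "indep_var borel (\<lambda>\<omega>. X \<omega> ^ a) borel (\<lambda>\<omega>. S \<omega> ^ b)" by (simp add: comp_def)
    show ?thesis using indep_var_lebesgue_integral[OF i iX iS] indep_var_integrable[OF i iX iS] that by auto
  qed
  have P: "\<And>a b. a \<le> 4 \<Longrightarrow> b \<le> 4 \<Longrightarrow> integrable M (\<lambda>\<omega>. X \<omega> ^ a * S \<omega> ^ b)"
    and PE: "\<And>a b. a \<le> 4 \<Longrightarrow> b \<le> 4 \<Longrightarrow> expectation (\<lambda>\<omega>. X \<omega> ^ a * S \<omega> ^ b) = expectation (\<lambda>\<omega>. X \<omega> ^ a) * expectation (\<lambda>\<omega>. S \<omega> ^ b)"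
    using prod by auto
  have e1: "\<And>x s::real. (x + s) ^ 1 = x ^ 1 * s ^ 0 + x ^ 0 * s ^ 1" by simp
  have e2: "\<And>x s::real. (x + s) ^ 2 = x ^ 2 * s ^ 0 + 2 * (x ^ 1 * s ^ 1) + x ^ 0 * s ^ 2"
    by (simp add: power2_eq_square algebra_simps)
  have e3: "\<And>x s::real. (x + s) ^ 3 = x ^ 3 * s ^ 0 + 3 * (x ^ 2 * s ^ 1) + 3 * (x ^ 1 * s ^ 2) + x ^ 0 * s ^ 3"
    by (simp add: power3_eq_cube power2_eq_square algebra_simps)
  have e4: "\<And>x s::real. (x + s) ^ 4 = x ^ 4 * s ^ 0 + 4 * (x ^ 3 * s ^ 1) + 6 * (x ^ 2 * s ^ 2) + 4 * (x ^ 1 * s ^ 3) + x ^ 0 * s ^ 4"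
    by (simp add: power4_eq_xxxx power3_eq_cube power2_eq_square algebra_simps)
  have int: "integrable M (\<lambda>\<omega>. (X \<omega> + S \<omega>) ^ n)" if "n \<le> 4" for n
  proof -
    have "n = 0 \<or> n = 1 \<or> n = 2 \<or> n = 3 \<or> n = 4" using that by auto
    then show ?thesis
    proof (elim disjE)
      assume "n = 0" then show ?thesis by simp
    next
      assume nn: "n = 1" show ?thesis unfolding nn e1 by (intro Bochner_Integration.integrable_add P) auto
    next
      assume nn: "n = 2" show ?thesis unfolding nn e2 by (intro Bochner_Integration.integrable_add integrable_mult_right P) auto
    next
      assume nn: "n = 3" show ?thesis unfolding nn e3 by (intro Bochner_Integration.integrable_add integrable_mult_right P) auto
    next
      assume nn: "n = 4" show ?thesis unfolding nn e4 by (intro Bochner_Integration.integrable_add integrable_mult_right P) auto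
    qed
  qed
  have m1: "expectation (\<lambda>\<omega>. X \<omega> + S \<omega>) = 0"
    using iX[of 1] iS[of 1] EX ES by simp
  define T where "T a b = (\<lambda>\<omega>. X \<omega> ^ a * S \<omega> ^ b)" for a b
  have TI: "\<And>a b. a \<le> 4 \<Longrightarrow> b \<le> 4 \<Longrightarrow> integrable M (T a b)" using P by (simp add: T_def)
  have TE: "\<And>a b. a \<le> 4 \<Longrightarrow> b \<le> 4 \<Longrightarrow> expectation (T a b) = expectation (\<lambda>\<omega>. X \<omega> ^ a) * expectation (\<lambda>\<omega>. S \<omega> ^ b)"
    using PE by (simp add: T_def)
  have f2: "(\<lambda>\<omega>. (X \<omega> + S \<omega>) ^ 2) = (\<lambda>\<omega>. T 2 0 \<omega> + 2 * T 1 1 \<omega> + T 0 2 \<omega>)"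
    unfolding T_def e2 by simp
  have f4: "(\<lambda>\<omega>. (X \<omega> + S \<omega>) ^ 4) = (\<lambda>\<omega>. T 4 0 \<omega> + 4 * T 3 1 \<omega> + 6 * T 2 2 \<omega> + 4 * T 1 3 \<omega> + T 0 4 \<omega>)"
    unfolding T_def e4 by simp
  have m2: "expectation (\<lambda>\<omega>. (X \<omega> + S \<omega>) ^ 2) = expectation (\<lambda>\<omega>. X \<omega> ^ 2) + expectation (\<lambda>\<omega>. S \<omega> ^ 2)"
    unfolding f2 using TI[of 2 0] TI[of 1 1] TI[of 0 2] TE[of 2 0] TE[of 1 1] TE[of 0 2] EX ES by (simp add: prob_space)
  have m4: "expectation (\<lambda>\<omega>. (X \<omega> + S \<omega>) ^ 4) = expectation (\<lambda>\<omega>. X \<omega> ^ 4) + 6 * (expectation (\<lambda>\<omega>. X \<omega> ^ 2) * expectation (\<lambda>\<omega>. S \<omega> ^ 2)) + expectation (\<lambda>\<omega>. S \<omega> ^ 4)"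
    unfolding f4 using TI[of 4 0] TI[of 3 1] TI[of 2 2] TI[of 1 3] TI[of 0 4]
      TE[of 4 0] TE[of 3 1] TE[of 2 2] TE[of 1 3] TE[of 0 4] EX ES by (simp add: prob_space)
  have vX: "0 \<le> expectation (\<lambda>\<omega>. X \<omega> ^ 2)" by (intro integral_nonneg_AE) auto
  have S2: "expectation (\<lambda>\<omega>. S \<omega> ^ 2) = (\<Sum>j\<in>F. expectation (\<lambda>\<omega>. Y j \<omega> ^ 2))"
    using IH by (simp add: S_def)
  have S4: "expectation (\<lambda>\<omega>. S \<omega> ^ 4) \<le> (\<Sum>j\<in>F. expectation (\<lambda>\<omega>. Y j \<omega> ^ 4)) + 3 * (\<Sum>j\<in>F. expectation (\<lambda>\<omega>. Y j \<omega> ^ 2))\<^sup>2"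
    using IH by (simp add: S_def)
  have sY2: "(\<Sum>j\<in>insert i F. expectation (\<lambda>\<omega>. Y j \<omega> ^ 2)) = expectation (\<lambda>\<omega>. X \<omega> ^ 2) + (\<Sum>j\<in>F. expectation (\<lambda>\<omega>. Y j \<omega> ^ 2))"
    using insert.hyps by (simp add: X_def)
  have sY4: "(\<Sum>j\<in>insert i F. expectation (\<lambda>\<omega>. Y j \<omega> ^ 4)) = expectation (\<lambda>\<omega>. X \<omega> ^ 4) + (\<Sum>j\<in>F. expectation (\<lambda>\<omega>. Y j \<omega> ^ 4))"
    using insert.hyps by (simp add: X_def)
  define v where "v = expectation (\<lambda>\<omega>. X \<omega> ^ 2)"
  define V where "V = (\<Sum>j\<in>F. expectation (\<lambda>\<omega>. Y j \<omega> ^ 2))"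
  have v0: "0 \<le> v" using vX by (simp add: v_def)
  have ineq: "expectation (\<lambda>\<omega>. (X \<omega> + S \<omega>) ^ 4) \<le> (\<Sum>j\<in>insert i F. expectation (\<lambda>\<omega>. Y j \<omega> ^ 4)) + 3 * (\<Sum>j\<in>insert i F. expectation (\<lambda>\<omega>. Y j \<omega> ^ 2))\<^sup>2"
  proof -
    have "3 * (v + V)\<^sup>2 = 3 * v\<^sup>2 + 6 * (v * V) + 3 * V\<^sup>2" by (simp add: power2_eq_square algebra_simps)
    moreover have "0 \<le> v\<^sup>2" by simp
    ultimately show ?thesis unfolding m4 sY4 sY2 using S4 S2
      by (simp add: v_def[symmetric] V_def[symmetric]; smt (verit) zero_le_power2)
  qed
  have sum_eq': "\<And>\<omega>. (\<Sum>j\<in>insert i F. Y j \<omega>) = X \<omega> + S \<omega>"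
    using insert.hyps by (simp add: X_def S_def)
  show ?case
    unfolding sum_eq'
  proof (intro conjI allI impI)
    fix n :: nat assume "n \<le> 4" then show "integrable M (\<lambda>\<omega>. (X \<omega> + S \<omega>) ^ n)" by (rule int)
  next
    show "expectation (\<lambda>\<omega>. X \<omega> + S \<omega>) = 0" by (rule m1)
  next
    show "expectation (\<lambda>\<omega>. (X \<omega> + S \<omega>)\<^sup>2) = (\<Sum>j\<in>insert i F. expectation (\<lambda>\<omega>. (Y j \<omega>)\<^sup>2))"
      unfolding m2 sY2 S2 ..
  qed (rule ineq)
qed

end


lemma measure_gauss_UNIV[simp]: "measure (gauss s) UNIV = 1"
  using prob_space.prob_space[OF prob_space_gauss[of s]] by simp

locale gsetup =
  fixes p1 p2 :: nat and \<sigma> :: "nat \<Rightarrow> real"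
  assumes p1: "1 \<le> p1" and p2: "1 \<le> p2" and \<sigma>nn: "\<And>i. i < p1 \<Longrightarrow> 0 \<le> \<sigma> i"
begin

abbreviation "II \<equiv> {..<p1} \<times> {..<p2}"
abbreviation "NN \<equiv> (\<lambda>x::nat\<times>nat. gauss (\<sigma> (fst x)))"
abbreviation "MM \<equiv> PiM II NN"

lemma MM_law: "gauss_matrix_law p1 p2 \<sigma> = MM" by (simp add: gauss_matrix_law_def)

lemma fm_gauss: "finite_measure (gauss s)"
  using prob_space_gauss[of s] unfolding prob_space_def by blast

lemma PP: "product_prob_space NN"
  by (intro product_prob_spaceI prob_space_gauss)

lemma MMp: "prob_space MM"
  by (intro prob_space_PiM prob_space_gauss)

lemma space_MM: "space MM = PiE II (\<lambda>_. UNIV)"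
  by (simp add: space_PiM)

lemma coord_meas: "(\<lambda>\<omega>. \<omega> x) \<in> measurable MM (NN x)"
proof (cases "x \<in> II")
  case True then show ?thesis by (rule measurable_component_singleton)
next
  case False
  have eq: "\<And>\<omega>. \<omega> \<in> space MM \<Longrightarrow> \<omega> x = undefined"
    using False unfolding space_MM by (rule PiE_arb[rotated])
  show ?thesis
  proof -
    have "(\<lambda>\<omega>. \<omega> x) \<in> measurable MM (NN x) \<longleftrightarrow> (\<lambda>_. undefined) \<in> measurable MM (NN x)"
      by (rule measurable_cong) (rule eq)
    then show ?thesis using measurable_const[of undefined "NN x" MM] by simp
  qed
qed

lemma coord_borel[measurable]: "(\<lambda>\<omega>. \<omega> x) \<in> borel_measurable MM"
  using coord_meas[of x] unfolding measurable_cong_sets[OF refl sets_gauss] .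

lemma fin_II: "finite II" by simp

lemma one_coord:
  fixes f :: "real \<Rightarrow> real"
  assumes x: "x \<in> II" and fi: "integrable (NN x) f"
  shows "integrable MM (\<lambda>\<omega>. f (\<omega> x)) \<and> (\<integral>\<omega>. f (\<omega> x) \<partial>MM) = (\<integral>z. f z \<partial>NN x)"
proof -
  interpret PP: product_prob_space NN by (rule PP)
  let ?F = "\<lambda>z. if z = x then f else (\<lambda>_. 1::real)"
  have iF: "\<And>z. z \<in> II \<Longrightarrow> integrable (NN z) (?F z)"
    using fi by (auto intro: finite_measure.integrable_const fm_gauss)
  have eq: "\<And>\<omega>. (\<Prod>z\<in>II. ?F z (\<omega> z)) = f (\<omega> x)"
    using x by (subst prod.remove[OF fin_II x]) auto
  have "integrable MM (\<lambda>\<omega>. \<Prod>z\<in>II. ?F z (\<omega> z))"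
    by (rule PP.product_integrable_prod[OF fin_II iF])
  moreover have "(\<integral>\<omega>. (\<Prod>z\<in>II. ?F z (\<omega> z)) \<partial>MM) = (\<Prod>z\<in>II. integral\<^sup>L (NN z) (?F z))"
    by (rule PP.product_integral_prod[OF fin_II iF])
  moreover have "(\<Prod>z\<in>II. integral\<^sup>L (NN z) (?F z)) = integral\<^sup>L (NN x) f"
    using x by (subst prod.remove[OF fin_II x]) (auto intro!: prod.neutral)
  ultimately show ?thesis unfolding eq by simp
qed

lemma two_coord:
  fixes f g :: "real \<Rightarrow> real"
  assumes x: "x \<in> II" and y: "y \<in> II" and xy: "x \<noteq> y"
    and fi: "integrable (NN x) f" and gi: "integrable (NN y) g"
  shows "integrable MM (\<lambda>\<omega>. f (\<omega> x) * g (\<omega> y)) \<and>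
         (\<integral>\<omega>. f (\<omega> x) * g (\<omega> y) \<partial>MM) = (\<integral>z. f z \<partial>NN x) * (\<integral>z. g z \<partial>NN y)"
proof -
  interpret PP: product_prob_space NN by (rule PP)
  let ?F = "\<lambda>z. if z = x then f else if z = y then g else (\<lambda>_. 1::real)"
  have iF: "\<And>z. z \<in> II \<Longrightarrow> integrable (NN z) (?F z)"
    using fi gi by (auto intro: finite_measure.integrable_const fm_gauss)
  have y': "y \<in> II - {x}" using y xy by auto
  have eq: "\<And>\<omega>. (\<Prod>z\<in>II. ?F z (\<omega> z)) = f (\<omega> x) * g (\<omega> y)"
    using x xy by (subst prod.remove[OF fin_II x], subst prod.remove[OF _ y']) auto
  have "integrable MM (\<lambda>\<omega>. \<Prod>z\<in>II. ?F z (\<omega> z))"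
    by (rule PP.product_integrable_prod[OF fin_II iF])
  moreover have "(\<integral>\<omega>. (\<Prod>z\<in>II. ?F z (\<omega> z)) \<partial>MM) = (\<Prod>z\<in>II. integral\<^sup>L (NN z) (?F z))"
    by (rule PP.product_integral_prod[OF fin_II iF])
  moreover have "(\<Prod>z\<in>II. integral\<^sup>L (NN z) (?F z)) = integral\<^sup>L (NN x) f * integral\<^sup>L (NN y) g"
    using x xy by (subst prod.remove[OF fin_II x], subst prod.remove[OF _ y'])
      (auto intro!: prod.neutral)
  ultimately show ?thesis unfolding eq by simp
qed

end


lemma gz_int: "integrable (gauss s) (\<lambda>z. (z\<^sup>2 - c) ^ n)"
proof -
  have eq: "(\<lambda>z. (z\<^sup>2 - c) ^ n) = (\<lambda>z. \<Sum>k\<le>n. of_nat (n choose k) * (z ^ (2 * k)) * (- c) ^ (n - k))"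
    by (simp add: fun_eq_iff binomial_ring[of "_\<^sup>2" "- c", simplified diff_conv_add_uminus[symmetric]] power_mult)
  show ?thesis unfolding eq
    by (intro Bochner_Integration.integrable_sum integrable_mult_left integrable_mult_right)
       (use gauss_moment in blast)
qed

lemma poly_e4: fixes w c :: real shows "(w - c) ^ 4 = w ^ 4 - 4 * c * w ^ 3 + 6 * c\<^sup>2 * w\<^sup>2 - 4 * c ^ 3 * w + c ^ 4"
  by algebra
lemma poly_e2: fixes w c :: real shows "(w - c)\<^sup>2 = w\<^sup>2 - 2 * c * w + c\<^sup>2"
  by algebra
lemma poly_60: fixes s :: real shows "105 * s ^ 8 - 4 * s\<^sup>2 * (15 * s ^ 6) + 6 * s ^ 4 * (3 * s ^ 4) - 4 * s ^ 6 * s\<^sup>2 + s ^ 8 = 60 * s ^ 8"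
  by algebra
lemma poly_2: fixes s :: real shows "3 * s ^ 4 - 2 * s\<^sup>2 * s\<^sup>2 + s ^ 4 = 2 * s ^ 4"
  by algebra
lemma zpows: fixes z :: real shows "(z\<^sup>2)^4 = z ^ 8" "(z\<^sup>2)^3 = z ^ 6" "(z\<^sup>2)\<^sup>2 = z^4"
  by (simp_all flip: power_mult)

lemma gz_mom:
  assumes "0 \<le> s"
  shows "(\<integral>z. z\<^sup>2 - s\<^sup>2 \<partial>gauss s) = 0"
    and "(\<integral>z. (z\<^sup>2 - s\<^sup>2)\<^sup>2 \<partial>gauss s) = 2 * s ^ 4"
    and "(\<integral>z. (z\<^sup>2 - s\<^sup>2) ^ 4 \<partial>gauss s) = 60 * s ^ 8"
proof -
  have I: "\<And>n. integrable (gauss s) (\<lambda>z. z ^ n)" using gauss_moment by blast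
  have E: "\<And>n. (\<integral>z. z ^ n \<partial>gauss s) = gm s n" using gauss_moment assms by simp
  interpret prob_space "gauss s" by (rule prob_space_gauss)
  show "(\<integral>z. z\<^sup>2 - s\<^sup>2 \<partial>gauss s) = 0"
    using I E by (simp add: gm_vals prob_space)
  have e2: "\<And>z::real. (z\<^sup>2 - s\<^sup>2)\<^sup>2 = z ^ 4 - 2 * s\<^sup>2 * z\<^sup>2 + s ^ 4"
    unfolding poly_e2 zpows by (simp flip: power_mult)
  have "(\<integral>z. (z\<^sup>2 - s\<^sup>2)\<^sup>2 \<partial>gauss s) = 3 * s ^ 4 - 2 * s\<^sup>2 * s\<^sup>2 + s ^ 4"
    unfolding e2 using I E by (simp add: gm_vals prob_space)
  then show "(\<integral>z. (z\<^sup>2 - s\<^sup>2)\<^sup>2 \<partial>gauss s) = 2 * s ^ 4" unfolding poly_2 .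
  have e4: "\<And>z::real. (z\<^sup>2 - s\<^sup>2) ^ 4 = z ^ 8 - 4 * s\<^sup>2 * z ^ 6 + 6 * s ^ 4 * z ^ 4 - 4 * s ^ 6 * z\<^sup>2 + s ^ 8"
    unfolding poly_e4 zpows by (simp flip: power_mult)
  have "(\<integral>z. (z\<^sup>2 - s\<^sup>2) ^ 4 \<partial>gauss s) = 105 * s ^ 8 - 4 * s\<^sup>2 * (15 * s ^ 6) + 6 * s ^ 4 * (3 * s ^ 4) - 4 * s ^ 6 * s\<^sup>2 + s ^ 8"
    unfolding e4 using I E by (simp add: gm_vals prob_space)
  then show "(\<integral>z. (z\<^sup>2 - s\<^sup>2) ^ 4 \<partial>gauss s) = 60 * s ^ 8" unfolding poly_60 .
qed

context gsetup begin

sublocale MS: prob_space MM by (rule MMp)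

definition Yv :: "nat \<Rightarrow> nat \<Rightarrow> nat \<Rightarrow> (nat \<times> nat \<Rightarrow> real) \<Rightarrow> real" where
  "Yv i k j \<omega> = (if i = k then (\<omega> (i, j))\<^sup>2 - (\<sigma> i)\<^sup>2 else \<omega> (i, j) * \<omega> (k, j))"

lemma Y_moments:
  assumes i: "i < p1" and k: "k < p1" and j: "j < p2"
  shows "\<And>n. integrable MM (\<lambda>\<omega>. Yv i k j \<omega> ^ n)"
    and "MS.expectation (Yv i k j) = 0"
    and "MS.expectation (\<lambda>\<omega>. Yv i k j \<omega> ^ 2) = (if i = k then 2 * \<sigma> i ^ 4 else (\<sigma> i)\<^sup>2 * (\<sigma> k)\<^sup>2)"
    and "MS.expectation (\<lambda>\<omega>. Yv i k j \<omega> ^ 4) = (if i = k then 60 * \<sigma> i ^ 8 else 9 * \<sigma> i ^ 4 * \<sigma> k ^ 4)"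
proof -
  have xi: "(i, j) \<in> II" and xk: "(k, j) \<in> II" using i k j by auto
  have si: "0 \<le> \<sigma> i" and sk: "0 \<le> \<sigma> k" using \<sigma>nn i k by auto
  have I: "\<And>s n. integrable (gauss s) (\<lambda>z. z ^ n)" using gauss_moment by blast
  have Ei: "\<And>n. (\<integral>z. z ^ n \<partial>gauss (\<sigma> i)) = gm (\<sigma> i) n" using gauss_moment si by simp
  have Ek: "\<And>n. (\<integral>z. z ^ n \<partial>gauss (\<sigma> k)) = gm (\<sigma> k) n" using gauss_moment sk by simp
  have all: "integrable MM (\<lambda>\<omega>. Yv i k j \<omega> ^ n) \<and>
     MS.expectation (\<lambda>\<omega>. Yv i k j \<omega> ^ n) = (if i = k then (\<integral>z. (z\<^sup>2 - (\<sigma> i)\<^sup>2) ^ n \<partial>gauss (\<sigma> i)) else gm (\<sigma> i) n * gm (\<sigma> k) n)" for n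
  proof (cases "i = k")
    case True
    have "integrable MM (\<lambda>\<omega>. (\<lambda>z. (z\<^sup>2 - (\<sigma> i)\<^sup>2) ^ n) (\<omega> (i, j))) \<and>
          MS.expectation (\<lambda>\<omega>. (\<lambda>z. (z\<^sup>2 - (\<sigma> i)\<^sup>2) ^ n) (\<omega> (i, j))) = (\<integral>z. (z\<^sup>2 - (\<sigma> i)\<^sup>2) ^ n \<partial>gauss (\<sigma> i))"
      using one_coord[OF xi, of "\<lambda>z. (z\<^sup>2 - (\<sigma> i)\<^sup>2) ^ n"] gz_int by simp
    then show ?thesis using True by (simp add: Yv_def)
  next
    case False
    have xy: "(i, j) \<noteq> (k, j)" using False by simp
    have "integrable MM (\<lambda>\<omega>. (\<omega> (i, j)) ^ n * (\<omega> (k, j)) ^ n) \<and>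
          MS.expectation (\<lambda>\<omega>. (\<omega> (i, j)) ^ n * (\<omega> (k, j)) ^ n) = gm (\<sigma> i) n * gm (\<sigma> k) n"
      using two_coord[OF xi xk xy, of "\<lambda>z. z ^ n" "\<lambda>z. z ^ n"] I Ei Ek by simp
    then show ?thesis using False by (simp add: Yv_def power_mult_distrib)
  qed
  show "\<And>n. integrable MM (\<lambda>\<omega>. Yv i k j \<omega> ^ n)" using all by blast
  show "MS.expectation (Yv i k j) = 0"
    using all[of 1] gz_mom(1)[OF si] by (cases "i = k") (simp_all add: gm_def)
  show "MS.expectation (\<lambda>\<omega>. Yv i k j \<omega> ^ 2) = (if i = k then 2 * \<sigma> i ^ 4 else (\<sigma> i)\<^sup>2 * (\<sigma> k)\<^sup>2)"
    using all[of 2] gz_mom(2)[OF si] by (cases "i = k") (simp_all add: gm_vals)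
  show "MS.expectation (\<lambda>\<omega>. Yv i k j \<omega> ^ 4) = (if i = k then 60 * \<sigma> i ^ 8 else 9 * \<sigma> i ^ 4 * \<sigma> k ^ 4)"
    using all[of 4] gz_mom(3)[OF si] by (cases "i = k") (simp_all add: gm_vals power_mult_distrib)
qed

lemma coords_indep: "MS.indep_vars NN (\<lambda>x \<omega>. \<omega> x) II"
proof -
  interpret PP: product_prob_space NN by (rule PP)
  have "(0, 0) \<in> II" using p1 p2 by simp
  then have ne: "II \<noteq> {}" by blast
  have "distr MM (PiM II NN) (\<lambda>\<omega>. \<lambda>x\<in>II. \<omega> x) = distr MM MM (\<lambda>\<omega>. \<omega>)"
    by (rule distr_cong) (auto simp: space_MM)
  also have "\<dots> = MM" by simp
  also have "\<dots> = PiM II (\<lambda>x. distr MM (NN x) (\<lambda>\<omega>. \<omega> x))"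
    by (rule Finite_Product_Measure.PiM_cong, simp, rule distr_PiM_component[symmetric], rule prob_space_gauss, assumption)
  finally show ?thesis
    by (subst MS.indep_vars_iff_distr_eq_PiM[OF ne coord_meas])
qed

lemma Y_indep:
  assumes i: "i < p1" and k: "k < p1"
  shows "MS.indep_vars (\<lambda>_. borel) (\<lambda>j. Yv i k j) {..<p2}"
proof -
  define K :: "nat \<Rightarrow> (nat \<times> nat) set" where "K j = {(i, j), (k, j)}" for j
  have K: "\<And>j. j \<in> {..<p2} \<Longrightarrow> K j \<subseteq> II" using i k by (auto simp: K_def)
  have D: "disjoint_family_on K {..<p2}" by (auto simp: disjoint_family_on_def K_def)
  have ind: "MS.indep_vars (\<lambda>j. PiM (K j) NN) (\<lambda>j \<omega>. restrict (\<lambda>x. \<omega> x) (K j)) {..<p2}"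
    by (rule MS.indep_vars_restrict[OF coords_indep K D])
  define Yc :: "nat \<Rightarrow> (nat \<times> nat \<Rightarrow> real) \<Rightarrow> real" where "Yc j f = (if i = k then (f (i, j))\<^sup>2 - (\<sigma> i)\<^sup>2 else f (i, j) * (f (k, j) :: real))" for j f
  have m: "Yc j \<in> borel_measurable (PiM (K j) NN)" for j
  proof -
    have a: "(\<lambda>f. f (i, j)) \<in> borel_measurable (PiM (K j) NN)"
      using measurable_component_singleton[of "(i, j)" "K j" NN]
      unfolding measurable_cong_sets[OF refl sets_gauss] by (simp add: K_def)
    have b: "(\<lambda>f. f (k, j)) \<in> borel_measurable (PiM (K j) NN)"
      using measurable_component_singleton[of "(k, j)" "K j" NN]
      unfolding measurable_cong_sets[OF refl sets_gauss] by (simp add: K_def)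
    show ?thesis unfolding Yc_def using a b by measurable
  qed
  have "MS.indep_vars (\<lambda>_. borel) (\<lambda>j \<omega>. Yc j (restrict (\<lambda>x. \<omega> x) (K j))) {..<p2}"
    by (rule MS.indep_vars_compose2[OF ind m])
  moreover have "(\<lambda>j \<omega>. Yc j (restrict (\<lambda>x. \<omega> x) (K j))) = (\<lambda>j. Yv i k j)"
    by (auto simp: fun_eq_iff Yc_def Yv_def K_def)
  ultimately show ?thesis by (simp only:)
qed

end


lemma spec_col:
  fixes A :: "nat \<Rightarrow> nat \<Rightarrow> real"
  assumes k: "k < n"
  shows "L2_set (\<lambda>i. A i k) {..<n} \<le> spec_norm n n A"
proof -
  let ?x = "\<lambda>j. if j = k then 1 else (0::real)"
  have "(\<Sum>j<n. (?x j)\<^sup>2) \<le> 1" using k by (simp add: if_distrib[of "\<lambda>x. x\<^sup>2"] cong: if_cong)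
  from spec_ge[OF this, where n=n and A=A] show ?thesis
    using k by (simp add: if_distrib[of "\<lambda>x. _ * x"] cong: if_cong)
qed

lemma weighted_col:
  fixes A :: "nat \<Rightarrow> nat \<Rightarrow> real"
  assumes w: "L2_set w {..<n} \<le> 1" and w0: "\<And>i. 0 \<le> w i"
  shows "(\<Sum>i<n. w i * \<bar>A i k\<bar>) \<le> L2_set (\<lambda>i. A i k) {..<n}"
proof -
  have "(\<Sum>i<n. w i * \<bar>A i k\<bar>) = (\<Sum>i<n. \<bar>w i\<bar> * \<bar>A i k\<bar>)" using w0 by simp
  also have "\<dots> \<le> L2_set w {..<n} * L2_set (\<lambda>i. A i k) {..<n}" by (rule L2_set_mult_ineq)
  also have "\<dots> \<le> 1 * L2_set (\<lambda>i. A i k) {..<n}" by (intro mult_right_mono w) simp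
  finally show ?thesis by simp
qed

lemma spec_quad:
  fixes A :: "nat \<Rightarrow> nat \<Rightarrow> real"
  assumes x: "(\<Sum>j<n. (x j)\<^sup>2) \<le> 1"
  shows "(\<Sum>i<n. x i * (\<Sum>j<n. A i j * x j)) \<le> spec_norm n n A"
proof -
  have Lx: "L2_set x {..<n} \<le> 1" using x by (simp add: L2_set_def)
  have "(\<Sum>i<n. x i * (\<Sum>j<n. A i j * x j)) \<le> (\<Sum>i<n. \<bar>x i\<bar> * \<bar>\<Sum>j<n. A i j * x j\<bar>)"
    by (intro sum_mono) (simp add: abs_mult[symmetric])
  also have "\<dots> \<le> L2_set x {..<n} * L2_set (\<lambda>i. \<Sum>j<n. A i j * x j) {..<n}" by (rule L2_set_mult_ineq)
  also have "\<dots> \<le> 1 * L2_set (\<lambda>i. \<Sum>j<n. A i j * x j) {..<n}" by (intro mult_right_mono Lx) simp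
  also have "\<dots> \<le> spec_norm n n A" using spec_ge[OF x, where n=n and A=A] by simp
  finally show ?thesis .
qed

lemma col_trick:
  fixes Z :: "nat \<times> nat \<Rightarrow> real" and \<sigma> :: "nat \<Rightarrow> real"
  assumes p2: "1 \<le> p2" and sm: "\<And>i. i < p1 \<Longrightarrow> 0 \<le> \<sigma> i \<and> \<sigma> i \<le> m"
  shows "(\<Sum>i<p1. (Z (i, 0))\<^sup>2) - real p2 * m\<^sup>2 \<le>
         spec_norm p1 p1 (\<lambda>i k. gram p2 Z i k - (if i = k then real p2 * (\<sigma> i)\<^sup>2 else 0))"
proof -
  define A where "A = (\<lambda>i k. gram p2 Z i k - (if i = k then real p2 * (\<sigma> i)\<^sup>2 else 0))"
  define R where "R = (\<Sum>i<p1. (Z (i, 0))\<^sup>2)"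
  have R0: "0 \<le> R" unfolding R_def by (intro sum_nonneg) simp
  have m0: "0 \<le> real p2 * m\<^sup>2" by simp
  show ?thesis
  proof (cases "R = 0")
    case True
    have "0 \<le> spec_norm p1 p1 A" by (rule spec_nonneg)
    then show ?thesis using True m0 unfolding A_def R_def[symmetric] by linarith
  next
    case False
    define r where "r = sqrt R"
    have rp: "r > 0" using False R0 by (simp add: r_def)
    have rr: "r * r = R" using R0 by (simp add: r_def)
    define x where "x i = Z (i, 0) / r" for i
    have "(\<Sum>i<p1. (x i)\<^sup>2) = (\<Sum>i<p1. (Z (i, 0))\<^sup>2) / (r * r)"
      by (simp add: x_def power_divide sum_divide_distrib power2_eq_square)
    also have "\<dots> = 1" unfolding R_def[symmetric] rr using False by simp
    finally have sx: "(\<Sum>i<p1. (x i)\<^sup>2) = 1" .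
    define u where "u j = (\<Sum>i<p1. x i * Z (i, j))" for j
    have "u 0 = (\<Sum>i<p1. (Z (i, 0))\<^sup>2) / r"
      by (simp add: u_def x_def sum_divide_distrib power2_eq_square)
    also have "\<dots> = r" unfolding R_def[symmetric] rr[symmetric] using rp by simp
    finally have u0: "u 0 = r" .
    have q1: "(\<Sum>i<p1. x i * (\<Sum>k<p1. gram p2 Z i k * x k)) = (\<Sum>j<p2. (u j)\<^sup>2)"
    proof -
      have "(\<Sum>i<p1. x i * (\<Sum>k<p1. gram p2 Z i k * x k)) = (\<Sum>i<p1. \<Sum>k<p1. \<Sum>j<p2. x i * Z (i, j) * (x k * Z (k, j)))"
        by (simp add: gram_def sum_distrib_left sum_distrib_right mult_ac)
      also have "\<dots> = (\<Sum>i<p1. \<Sum>j<p2. \<Sum>k<p1. x i * Z (i, j) * (x k * Z (k, j)))"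
        by (rule sum.cong[OF refl], rule sum.swap)
      also have "\<dots> = (\<Sum>j<p2. \<Sum>i<p1. \<Sum>k<p1. x i * Z (i, j) * (x k * Z (k, j)))"
        by (rule sum.swap)
      also have "\<dots> = (\<Sum>j<p2. (u j)\<^sup>2)"
        by (simp add: u_def power2_eq_square sum_product)
      finally show ?thesis .
    qed
    have q2: "(\<Sum>i<p1. x i * (\<Sum>k<p1. A i k * x k)) =
        (\<Sum>i<p1. x i * (\<Sum>k<p1. gram p2 Z i k * x k)) - (\<Sum>i<p1. real p2 * (\<sigma> i)\<^sup>2 * (x i)\<^sup>2)"
    proof -
      have "\<And>i. i < p1 \<Longrightarrow> (\<Sum>k<p1. A i k * x k) = (\<Sum>k<p1. gram p2 Z i k * x k) - real p2 * (\<sigma> i)\<^sup>2 * x i"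
        by (simp add: A_def left_diff_distrib sum_subtractf if_distrib[of "\<lambda>y. y * _"] cong: if_cong)
      then have "(\<Sum>i<p1. x i * (\<Sum>k<p1. A i k * x k)) = (\<Sum>i<p1. x i * (\<Sum>k<p1. gram p2 Z i k * x k) - real p2 * (\<sigma> i)\<^sup>2 * (x i)\<^sup>2)"
        by (intro sum.cong) (auto simp: right_diff_distrib power2_eq_square mult_ac)
      then show ?thesis by (simp add: sum_subtractf)
    qed
    have q3: "(\<Sum>i<p1. real p2 * (\<sigma> i)\<^sup>2 * (x i)\<^sup>2) \<le> real p2 * m\<^sup>2"
    proof -
      have "(\<Sum>i<p1. real p2 * (\<sigma> i)\<^sup>2 * (x i)\<^sup>2) \<le> (\<Sum>i<p1. real p2 * m\<^sup>2 * (x i)\<^sup>2)"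
        using sm by (intro sum_mono mult_right_mono mult_left_mono power_mono) auto
      also have "\<dots> = real p2 * m\<^sup>2" using sx by (simp add: sum_distrib_left[symmetric])
      finally show ?thesis .
    qed
    have q4: "R \<le> (\<Sum>j<p2. (u j)\<^sup>2)"
    proof -
      have "(u 0)\<^sup>2 \<le> (\<Sum>j<p2. (u j)\<^sup>2)" using p2 by (intro member_le_sum) auto
      then show ?thesis using u0 rr by (simp add: power2_eq_square)
    qed
    have "(\<Sum>i<p1. x i * (\<Sum>k<p1. A i k * x k)) \<le> spec_norm p1 p1 A"
      by (rule spec_quad) (simp add: sx)
    then show ?thesis using q1 q2 q3 q4 by (simp add: A_def[symmetric] R_def[symmetric])
  qed
qed


lemma spec_cont: "continuous_on UNIV (\<lambda>B::nat\<times>nat\<Rightarrow>real. spec_norm n m (\<lambda>i j. B (i, j)))"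
proof -
  let ?g = "\<lambda>B::nat\<times>nat\<Rightarrow>real. spec_norm n m (\<lambda>i j. B (i, j))"
  have "(?g \<longlongrightarrow> ?g B0) (at B0)" for B0
  proof -
    let ?h = "\<lambda>B::nat\<times>nat\<Rightarrow>real. \<Sum>i<n. \<Sum>j<m. \<bar>B (i, j) - B0 (i, j)\<bar>"
    have hc: "continuous_on UNIV ?h"
      by (intro continuous_on_sum continuous_on_rabs continuous_on_diff continuous_on_const
          continuous_on_product_coordinates)
    then have "isCont ?h B0" by (simp add: continuous_on_eq_continuous_at)
    then have "(?h \<longlongrightarrow> ?h B0) (at B0)" by (simp add: isCont_def)
    moreover have "?h B0 = 0" by simp
    ultimately have h0: "(?h \<longlongrightarrow> 0) (at B0)" by simp
    have bnd: "norm (?g B - ?g B0) \<le> ?h B" for B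
    proof -
      have a: "?g B \<le> ?g B0 + ?h B" using spec_lip[of n m "\<lambda>i j. B (i, j)" "\<lambda>i j. B0 (i, j)"] by simp
      have b: "?g B0 \<le> ?g B + ?h B" using spec_lip[of n m "\<lambda>i j. B0 (i, j)" "\<lambda>i j. B (i, j)"]
        by (simp add: abs_minus_commute)
      show ?thesis using a b by simp
    qed
    have "((\<lambda>B. ?g B - ?g B0) \<longlongrightarrow> 0) (at B0)"
      by (rule Lim_null_comparison[OF always_eventually h0]) (use bnd in blast)
    then show ?thesis by (simp add: Lim_null[symmetric])
  qed
  then show ?thesis by (simp add: continuous_on_def)
qed

context gsetup begin

definition Ac :: "(nat \<times> nat \<Rightarrow> real) \<Rightarrow> nat \<Rightarrow> nat \<Rightarrow> real" where
  "Ac Z i k = gram p2 Z i k - (\<integral>Z'. gram p2 Z' i k \<partial>MM)"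

lemma gram_Y:
  assumes "i < p1" "k < p1"
  shows "gram p2 Z i k = (\<Sum>j<p2. Yv i k j Z + (if i = k then (\<sigma> i)\<^sup>2 else 0))"
  unfolding gram_def by (intro sum.cong) (auto simp: Yv_def power2_eq_square)

lemma gram_mean:
  assumes i: "i < p1" and k: "k < p1"
  shows "(\<integral>Z. gram p2 Z i k \<partial>MM) = real p2 * (if i = k then (\<sigma> i)\<^sup>2 else 0)"
proof -
  have I: "\<And>j. j \<in> {..<p2} \<Longrightarrow> integrable MM (\<lambda>Z. Yv i k j Z + (if i = k then (\<sigma> i)\<^sup>2 else 0))"
    using Y_moments(1)[OF i k, of _ 1] by auto
  have "(\<integral>Z. gram p2 Z i k \<partial>MM) = (\<integral>Z. (\<Sum>j<p2. Yv i k j Z + (if i = k then (\<sigma> i)\<^sup>2 else 0)) \<partial>MM)"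
    by (simp add: gram_Y[OF i k])
  also have "\<dots> = (\<Sum>j<p2. \<integral>Z. Yv i k j Z + (if i = k then (\<sigma> i)\<^sup>2 else 0) \<partial>MM)"
    by (rule Bochner_Integration.integral_sum[OF I])
  also have "\<dots> = (\<Sum>j<p2. (if i = k then (\<sigma> i)\<^sup>2 else 0))"
  proof (intro sum.cong refl)
    fix j assume j: "j \<in> {..<p2}"
    have "integrable MM (Yv i k j)" using Y_moments(1)[OF i k, of j 1] j by simp
    then show "(\<integral>Z. Yv i k j Z + (if i = k then (\<sigma> i)\<^sup>2 else 0) \<partial>MM) = (if i = k then (\<sigma> i)\<^sup>2 else 0)"
      using Y_moments(2)[OF i k, of j] j by (simp add: MS.prob_space)
  qed
  finally show ?thesis by simp
qed

lemma Ac_eq: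
  assumes i: "i < p1" and k: "k < p1"
  shows "Ac Z i k = (\<Sum>j<p2. Yv i k j Z)"
    and "Ac Z i k = gram p2 Z i k - (if i = k then real p2 * (\<sigma> i)\<^sup>2 else 0)"
proof -
  show 2: "Ac Z i k = gram p2 Z i k - (if i = k then real p2 * (\<sigma> i)\<^sup>2 else 0)"
    unfolding Ac_def gram_mean[OF i k] by simp
  show "Ac Z i k = (\<Sum>j<p2. Yv i k j Z)"
    unfolding 2 gram_Y[OF i k] by (simp add: sum.distrib)
qed

lemma entry_lb:
  assumes i: "i < p1" and k: "k < p1"
  shows "integrable MM (\<lambda>Z. Ac Z i k)"
    and "integrable MM (\<lambda>Z. \<bar>Ac Z i k\<bar>)"
    and "sqrt (real p2) * \<sigma> i * \<sigma> k / 6 \<le> MS.expectation (\<lambda>Z. \<bar>Ac Z i k\<bar>)"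
proof -
  define v where "v = (if i = k then 2 * \<sigma> i ^ 4 else (\<sigma> i)\<^sup>2 * (\<sigma> k)\<^sup>2)"
  define q where "q = (if i = k then 60 * \<sigma> i ^ 8 else 9 * \<sigma> i ^ 4 * \<sigma> k ^ 4)"
  have si: "0 \<le> \<sigma> i" and sk: "0 \<le> \<sigma> k" using \<sigma>nn i k by auto
  have SM: "(\<forall>n\<le>4. integrable MM (\<lambda>\<omega>. (\<Sum>j\<in>{..<p2}. Yv i k j \<omega>) ^ n)) \<and>
         MS.expectation (\<lambda>\<omega>. \<Sum>j\<in>{..<p2}. Yv i k j \<omega>) = 0 \<and>
         MS.expectation (\<lambda>\<omega>. (\<Sum>j\<in>{..<p2}. Yv i k j \<omega>) ^ 2) = (\<Sum>j\<in>{..<p2}. MS.expectation (\<lambda>\<omega>. Yv i k j \<omega> ^ 2)) \<and>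
         MS.expectation (\<lambda>\<omega>. (\<Sum>j\<in>{..<p2}. Yv i k j \<omega>) ^ 4) \<le>
           (\<Sum>j\<in>{..<p2}. MS.expectation (\<lambda>\<omega>. Yv i k j \<omega> ^ 4)) + 3 * (\<Sum>j\<in>{..<p2}. MS.expectation (\<lambda>\<omega>. Yv i k j \<omega> ^ 2))\<^sup>2"
    by (rule MS.sum_moments[OF _ Y_indep[OF i k]]) (auto intro: Y_moments[OF i k])
  have e2: "(\<Sum>j\<in>{..<p2}. MS.expectation (\<lambda>\<omega>. Yv i k j \<omega> ^ 2)) = real p2 * v"
    using Y_moments(3)[OF i k] by (simp add: v_def)
  have e4: "(\<Sum>j\<in>{..<p2}. MS.expectation (\<lambda>\<omega>. Yv i k j \<omega> ^ 4)) = real p2 * q"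
    using Y_moments(4)[OF i k] by (simp add: q_def)
  define S where "S = (\<lambda>\<omega>. \<Sum>j<p2. Yv i k j \<omega>)"
  have AS': "\<And>Z. Ac Z i k = S Z" by (simp add: S_def Ac_eq(1)[OF i k])
  have AS: "(\<lambda>Z. Ac Z i k) = S" by (simp add: fun_eq_iff AS')
  have iS: "\<And>n. n \<le> 4 \<Longrightarrow> integrable MM (\<lambda>\<omega>. S \<omega> ^ n)" using SM by (simp add: S_def)
  have iS1: "integrable MM S" using iS[of 1] by simp
  show "integrable MM (\<lambda>Z. Ac Z i k)" unfolding AS by (rule iS1)
  show "integrable MM (\<lambda>Z. \<bar>Ac Z i k\<bar>)" unfolding AS' using iS1 by (rule integrable_abs)
  have ES2: "MS.expectation (\<lambda>\<omega>. S \<omega> ^ 2) = real p2 * v" using SM e2 by (simp add: S_def)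
  have ES4: "MS.expectation (\<lambda>\<omega>. S \<omega> ^ 4) \<le> real p2 * q + 3 * (real p2 * v)\<^sup>2" using SM e2 e4 by (simp add: S_def)
  have v0: "0 \<le> v" by (simp add: v_def)
  have qv: "q \<le> 15 * v\<^sup>2"
  proof (cases "i = k")
    case True
    have "(\<sigma> i ^ 4)\<^sup>2 = \<sigma> i ^ 8" by (simp flip: power_mult)
    then show ?thesis using True by (simp add: q_def v_def power_mult_distrib)
  next
    case False
    have "((\<sigma> i)\<^sup>2 * (\<sigma> k)\<^sup>2)\<^sup>2 = \<sigma> i ^ 4 * \<sigma> k ^ 4" by (simp add: power_mult_distrib flip: power_mult)
    moreover have "0 \<le> \<sigma> i ^ 4 * \<sigma> k ^ 4" by simp
    ultimately show ?thesis using False by (simp add: q_def v_def)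
  qed
  have pp: "real p2 \<le> (real p2)\<^sup>2" using p2 by (simp add: power2_eq_square)
  have q0: "0 \<le> q" by (simp add: q_def)
  have "real p2 * q \<le> (real p2)\<^sup>2 * (15 * v\<^sup>2)"
    using pp qv q0 by (intro mult_mono) auto
  then have bnd: "MS.expectation (\<lambda>\<omega>. S \<omega> ^ 4) \<le> 18 * (MS.expectation (\<lambda>\<omega>. S \<omega> ^ 2))\<^sup>2"
    using ES4 unfolding ES2 by (simp add: power_mult_distrib)
  have Sm: "S \<in> borel_measurable MM" using iS1 by (rule borel_measurable_integrable)
  have lb: "sqrt (MS.expectation (\<lambda>\<omega>. S \<omega> ^ 2)) / 6 \<le> MS.expectation (\<lambda>\<omega>. \<bar>S \<omega>\<bar>)"
    by (rule MS.abs_lower_moment[OF Sm iS iS bnd]) auto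
  have "sqrt (real p2) * \<sigma> i * \<sigma> k \<le> sqrt (real p2 * v)"
  proof -
    have "\<sigma> i * \<sigma> k \<le> sqrt v"
    proof (cases "i = k")
      case True
      have "\<sigma> i * \<sigma> i = sqrt ((\<sigma> i ^ 2)\<^sup>2)" using si by (simp add: power2_eq_square)
      also have "\<dots> \<le> sqrt v"
      proof -
        have "((\<sigma> i)\<^sup>2)\<^sup>2 = \<sigma> i ^ 4" by (simp flip: power_mult)
        moreover have "0 \<le> \<sigma> i ^ 4" by simp
        ultimately show ?thesis using True by (simp add: v_def)
      qed
      finally show ?thesis using True by simp
    next
      case False
      then show ?thesis using si sk by (simp add: v_def real_sqrt_mult)
    qed
    then show ?thesis using p2 by (simp add: real_sqrt_mult mult.assoc mult_left_mono)
  qed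
  then show "sqrt (real p2) * \<sigma> i * \<sigma> k / 6 \<le> MS.expectation (\<lambda>Z. \<bar>Ac Z i k\<bar>)"
    using lb unfolding AS' ES2 by (simp add: divide_right_mono)
qed

end


lemma spec_norm_cong:
  assumes "\<And>i j. i < n \<Longrightarrow> j < m \<Longrightarrow> A i j = B i j"
  shows "spec_norm n m A = spec_norm n m B"
proof -
  have eq: "\<And>x. (\<Sum>i<n. (\<Sum>j<m. A i j * x j)\<^sup>2) = (\<Sum>i<n. (\<Sum>j<m. B i j * x j)\<^sup>2)"
    using assms by (auto intro!: sum.cong)
  show ?thesis by (simp add: spec_norm_def eq)
qed

context gsetup begin

definition FF :: "(nat \<times> nat \<Rightarrow> real) \<Rightarrow> real" where
  "FF Z = spec_norm p1 p1 (\<lambda>i k. Ac Z i k)"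

lemma FF_meas: "FF \<in> borel_measurable MM"
proof -
  define H where "H Z = (\<lambda>ik::nat\<times>nat. Ac Z (fst ik) (snd ik))" for Z
  have Hm: "H \<in> borel_measurable MM"
  proof (rule measurable_coordinatewise_then_product)
    fix ik :: "nat \<times> nat"
    show "(\<lambda>Z. H Z ik) \<in> borel_measurable MM"
      unfolding H_def Ac_def gram_def by measurable
  qed
  define g where "g B = spec_norm p1 p1 (\<lambda>i j. B (i, j))" for B :: "nat \<times> nat \<Rightarrow> real"
  have gm: "g \<in> borel_measurable borel"
    unfolding g_def by (rule borel_measurable_continuous_onI[OF spec_cont])
  have "g \<circ> H \<in> borel_measurable MM" by (rule measurable_comp[OF Hm gm])
  moreover have "g \<circ> H = FF" by (simp add: fun_eq_iff g_def H_def FF_def)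
  ultimately show ?thesis by simp
qed

lemma FF_int: "integrable MM FF"
proof (rule Bochner_Integration.integrable_bound)
  show "integrable MM (\<lambda>Z. \<Sum>i<p1. \<Sum>k<p1. \<bar>Ac Z i k\<bar>)"
    by (intro Bochner_Integration.integrable_sum entry_lb(2)) auto
  show "FF \<in> borel_measurable MM" by (rule FF_meas)
  show "AE Z in MM. norm (FF Z) \<le> norm (\<Sum>i<p1. \<Sum>k<p1. \<bar>Ac Z i k\<bar>)"
  proof (rule AE_I2)
    fix Z
    have "0 \<le> FF Z" unfolding FF_def by (rule spec_nonneg)
    moreover have "FF Z \<le> (\<Sum>i<p1. \<Sum>k<p1. \<bar>Ac Z i k\<bar>)" unfolding FF_def by (rule spec_le_sum_abs)
    moreover have "0 \<le> (\<Sum>i<p1. \<Sum>k<p1. \<bar>Ac Z i k\<bar>)" by (intro sum_nonneg) auto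
    ultimately show "norm (FF Z) \<le> norm (\<Sum>i<p1. \<Sum>k<p1. \<bar>Ac Z i k\<bar>)" by simp
  qed
qed

lemma LB1:
  assumes sm: "\<And>i. i < p1 \<Longrightarrow> \<sigma> i \<le> m"
  shows "(\<Sum>i<p1. (\<sigma> i)\<^sup>2) - real p2 * m\<^sup>2 \<le> MS.expectation FF"
proof -
  have pt: "(\<Sum>i<p1. (Z (i, 0))\<^sup>2) - real p2 * m\<^sup>2 \<le> FF Z" for Z
  proof -
    have "FF Z = spec_norm p1 p1 (\<lambda>i k. gram p2 Z i k - (if i = k then real p2 * (\<sigma> i)\<^sup>2 else 0))"
      unfolding FF_def by (rule spec_norm_cong) (rule Ac_eq(2))
    then show ?thesis using col_trick[OF p2, of p1 \<sigma> m Z] \<sigma>nn sm by simp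
  qed
  have ci: "\<And>i. i < p1 \<Longrightarrow> integrable MM (\<lambda>Z. (Z (i, 0))\<^sup>2) \<and> MS.expectation (\<lambda>Z. (Z (i, 0))\<^sup>2) = (\<sigma> i)\<^sup>2"
  proof -
    fix i assume i: "i < p1"
    have x: "(i, 0) \<in> II" using i p2 by simp
    have "integrable MM (\<lambda>\<omega>. (\<lambda>z. z ^ 2) (\<omega> (i, 0))) \<and> MS.expectation (\<lambda>\<omega>. (\<lambda>z. z ^ 2) (\<omega> (i, 0))) = (\<integral>z. z ^ 2 \<partial>gauss (\<sigma> i))"
      using one_coord[OF x, of "\<lambda>z. z ^ 2"] gauss_moment by simp
    moreover have "(\<integral>z. z ^ 2 \<partial>gauss (\<sigma> i)) = (\<sigma> i)\<^sup>2" using gauss_moment[of "\<sigma> i" 2] \<sigma>nn[OF i] by (simp add: gm_vals)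
    ultimately show "integrable MM (\<lambda>Z. (Z (i, 0))\<^sup>2) \<and> MS.expectation (\<lambda>Z. (Z (i, 0))\<^sup>2) = (\<sigma> i)\<^sup>2" by simp
  qed
  have iL: "integrable MM (\<lambda>Z. (\<Sum>i<p1. (Z (i, 0))\<^sup>2) - real p2 * m\<^sup>2)"
    using ci by (intro Bochner_Integration.integrable_diff Bochner_Integration.integrable_sum) auto
  have iS: "integrable MM (\<lambda>Z. \<Sum>i<p1. (Z (i, 0))\<^sup>2)"
    using ci by (intro Bochner_Integration.integrable_sum) auto
  have ES: "MS.expectation (\<lambda>Z. \<Sum>i<p1. (Z (i, 0))\<^sup>2) = (\<Sum>i<p1. (\<sigma> i)\<^sup>2)"
    by (subst Bochner_Integration.integral_sum) (use ci in auto)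
  have "MS.expectation (\<lambda>Z. (\<Sum>i<p1. (Z (i, 0))\<^sup>2) - real p2 * m\<^sup>2) = (\<Sum>i<p1. (\<sigma> i)\<^sup>2) - real p2 * m\<^sup>2"
    using iS ES by (simp add: MS.prob_space)
  moreover have "MS.expectation (\<lambda>Z. (\<Sum>i<p1. (Z (i, 0))\<^sup>2) - real p2 * m\<^sup>2) \<le> MS.expectation FF"
    by (rule integral_mono[OF iL FF_int pt])
  ultimately show ?thesis by simp
qed

lemma LB2:
  assumes k: "k < p1" and sk: "\<sigma> k = m" and S: "0 < (\<Sum>i<p1. (\<sigma> i)\<^sup>2)"
  shows "sqrt (real p2 * (\<Sum>i<p1. (\<sigma> i)\<^sup>2)) * m / 6 \<le> MS.expectation FF"
proof -
  define S where "S = (\<Sum>i<p1. (\<sigma> i)\<^sup>2)"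
  have Sp: "0 < S" using S by (simp add: S_def)
  define w where "w i = \<bar>\<sigma> i\<bar> / sqrt S" for i
  have w0: "\<And>i. 0 \<le> w i" using Sp by (auto simp: w_def intro!: divide_nonneg_nonneg)
  have Lw: "L2_set w {..<p1} \<le> 1"
  proof -
    have "(\<Sum>i<p1. (w i)\<^sup>2) = (\<Sum>i<p1. (\<sigma> i)\<^sup>2) / S"
      using Sp by (simp add: w_def power_divide sum_divide_distrib[symmetric])
    also have "\<dots> = 1" using Sp by (simp add: S_def)
    finally show ?thesis by (simp add: L2_set_def)
  qed
  have pt: "(\<Sum>i<p1. w i * \<bar>Ac Z i k\<bar>) \<le> FF Z" for Z
    using weighted_col[OF Lw w0, of "\<lambda>i k. Ac Z i k" k] spec_col[OF k, of "\<lambda>i k. Ac Z i k"]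
    unfolding FF_def by linarith
  have iL: "integrable MM (\<lambda>Z. \<Sum>i<p1. w i * \<bar>Ac Z i k\<bar>)"
    using entry_lb(2)[OF _ k] by (intro Bochner_Integration.integrable_sum integrable_mult_right) auto
  have "MS.expectation (\<lambda>Z. \<Sum>i<p1. w i * \<bar>Ac Z i k\<bar>) = (\<Sum>i<p1. w i * MS.expectation (\<lambda>Z. \<bar>Ac Z i k\<bar>))"
    using entry_lb(2)[OF _ k] by (simp add: Bochner_Integration.integral_sum integrable_mult_right)
  also have "\<dots> \<ge> (\<Sum>i<p1. w i * (sqrt (real p2) * \<sigma> i * \<sigma> k / 6))"
    using entry_lb(3)[OF _ k] w0 by (intro sum_mono mult_left_mono) auto
  moreover have "(\<Sum>i<p1. w i * (sqrt (real p2) * \<sigma> i * \<sigma> k / 6)) = sqrt (real p2 * S) * m / 6"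
  proof -
    have "(\<Sum>i<p1. w i * (sqrt (real p2) * \<sigma> i * \<sigma> k / 6)) = (\<Sum>i<p1. (\<sigma> i)\<^sup>2) * (sqrt (real p2) * m / (6 * sqrt S))"
      unfolding sum_distrib_right
      by (intro sum.cong refl) (use \<sigma>nn sk in \<open>auto simp: w_def power2_eq_square mult_ac\<close>)
    also have "\<dots> = sqrt (real p2 * S) * m / 6"
    proof -
      have "S = sqrt S * sqrt S" using Sp by simp
      then show ?thesis using Sp unfolding S_def[symmetric] by (simp add: real_sqrt_mult field_simps)
    qed
    finally show ?thesis .
  qed
  moreover have "MS.expectation (\<lambda>Z. \<Sum>i<p1. w i * \<bar>Ac Z i k\<bar>) \<le> MS.expectation FF"
    by (rule integral_mono[OF iL FF_int pt])
  ultimately show ?thesis unfolding S_def by linarith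
qed

end


lemma final_arith:
  fixes S R E p m :: real
  assumes S0: "0 \<le> S" and R0: "0 \<le> R" and RR: "R\<^sup>2 = p * S * m\<^sup>2"
    and E1: "S - p * m\<^sup>2 \<le> E" and E2: "R / 6 \<le> E"
  shows "1 / 16 * (S + R) \<le> E"
proof (cases "2 * (p * m\<^sup>2) \<le> S")
  case True
  then have a: "S \<le> 2 * E" using E1 by linarith
  have b: "R \<le> 6 * E" using E2 by linarith
  show ?thesis using a b S0 R0 by (simp add: field_simps)
next
  case False
  have "S \<le> 3 / 2 * R"
  proof (rule ccontr)
    assume "\<not> S \<le> 3 / 2 * R"
    then have lt: "3 / 2 * R < S" by simp
    have "(3 / 2 * R) * (3 / 2 * R) \<le> S * S"
      using lt R0 by (intro mult_mono) auto
    moreover have "S * S \<le> 2 * R\<^sup>2"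
    proof -
      have "S * S \<le> S * (2 * (p * m\<^sup>2))" using False S0 by (intro mult_left_mono) auto
      then show ?thesis unfolding RR by (simp add: algebra_simps)
    qed
    ultimately have "9 / 4 * R\<^sup>2 \<le> 2 * R\<^sup>2" by (simp add: power2_eq_square algebra_simps)
    then have "R\<^sup>2 \<le> 0" by simp
    then have "R = 0" by simp
    then have "S * S \<le> 0" using \<open>S * S \<le> 2 * R\<^sup>2\<close> by simp
    moreover have "0 < S * S" using lt \<open>R = 0\<close> by simp
    ultimately show False by linarith
  qed
  then show ?thesis using E2 R0 by (simp add: field_simps)
qed

theorem theorem3p5:
  shows "\<exists>c>0. \<forall>(p1::nat) (p2::nat) (\<sigma>::nat \<Rightarrow> real).
     p1 \<ge> 1 \<longrightarrow> p2 \<ge> 1 \<longrightarrow> (\<forall>i<p1. \<sigma> i \<ge> 0) \<longrightarrow>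
     (let M = gauss_matrix_law p1 p2 \<sigma> in
       (\<integral>Z. spec_norm p1 p1 (\<lambda>i k. gram p2 Z i k - (\<integral>Z'. gram p2 Z' i k \<partial>M)) \<partial>M)
       \<ge> c * ((\<Sum>i<p1. (\<sigma> i)\<^sup>2)
               + sqrt (real p2 * (\<Sum>i<p1. (\<sigma> i)\<^sup>2)) * (MAX i\<in>{..<p1}. \<sigma> i)))"
proof (intro exI[of _ "1 / 16 :: real"] conjI allI impI)
  show "(0::real) < 1 / 16" by simp
  fix p1 p2 :: nat and \<sigma> :: "nat \<Rightarrow> real"
  assume h1: "p1 \<ge> 1" and h2: "p2 \<ge> 1" and h3: "\<forall>i<p1. \<sigma> i \<ge> 0"
  interpret G: gsetup p1 p2 \<sigma> by unfold_locales (use h1 h2 h3 in auto)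
  define m where "m = (MAX i\<in>{..<p1}. \<sigma> i)"
  define S where "S = (\<Sum>i<p1. (\<sigma> i)\<^sup>2)"
  have "\<sigma> 0 \<in> \<sigma> ` {..<p1}" using h1 by simp
  then have ne: "\<sigma> ` {..<p1} \<noteq> {}" by blast
  have "m \<in> \<sigma> ` {..<p1}" unfolding m_def by (rule Max_in) (use ne in auto)
  then obtain k where k: "k < p1" and sk: "\<sigma> k = m" by auto
  have sm: "\<And>i. i < p1 \<Longrightarrow> \<sigma> i \<le> m" unfolding m_def by (rule Max_ge) auto
  have m0: "0 \<le> m" using h3 k sk by auto
  have S0: "0 \<le> S" unfolding S_def by (intro sum_nonneg) auto
  have eqI: "(\<integral>Z. spec_norm p1 p1 (\<lambda>i k. gram p2 Z i k - (\<integral>Z'. gram p2 Z' i k \<partial>gauss_matrix_law p1 p2 \<sigma>)) \<partial>gauss_matrix_law p1 p2 \<sigma>)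
      = G.MS.expectation G.FF"
  proof -
    have "G.FF = (\<lambda>Z. spec_norm p1 p1 (\<lambda>i k. gram p2 Z i k - (\<integral>Z'. gram p2 Z' i k \<partial>gauss_matrix_law p1 p2 \<sigma>)))"
      by (simp add: fun_eq_iff G.MM_law G.FF_def G.Ac_def)
    then show ?thesis by (simp add: G.MM_law)
  qed
  have E0: "0 \<le> G.MS.expectation G.FF"
    by (intro integral_nonneg_AE AE_I2) (simp add: G.FF_def spec_nonneg)
  define R where "R = sqrt (real p2 * S) * m"
  have R0: "0 \<le> R" using S0 m0 by (simp add: R_def)
  have RR: "R\<^sup>2 = real p2 * S * m\<^sup>2" using S0 by (simp add: R_def power_mult_distrib)
  have E1: "S - real p2 * m\<^sup>2 \<le> G.MS.expectation G.FF" using G.LB1[OF sm] by (simp add: S_def)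
  have main: "1 / 16 * (S + R) \<le> G.MS.expectation G.FF"
  proof (cases "S = 0")
    case True
    then show ?thesis using E0 by (simp add: R_def)
  next
    case False
    then have "0 < S" using S0 by simp
    then have E2: "R / 6 \<le> G.MS.expectation G.FF" using G.LB2[OF k sk] by (simp add: R_def S_def)
    show ?thesis by (rule final_arith[OF S0 R0 RR E1 E2])
  qed
  show "let M = gauss_matrix_law p1 p2 \<sigma> in
       (\<integral>Z. spec_norm p1 p1 (\<lambda>i k. gram p2 Z i k - (\<integral>Z'. gram p2 Z' i k \<partial>M)) \<partial>M)
       \<ge> 1 / 16 * ((\<Sum>i<p1. (\<sigma> i)\<^sup>2)
               + sqrt (real p2 * (\<Sum>i<p1. (\<sigma> i)\<^sup>2)) * (MAX i\<in>{..<p1}. \<sigma> i))"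
    unfolding Let_def eqI using main by (simp add: R_def S_def m_def)
qed


end
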